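(* Let $\langle Q,A,\delta,\{q_0\},F\rangle$ be a transitive group automaton, $k\in\mathbb{N}$, and let $Q'\subseteq Q_k$ be a set of states of the $k$-digit buffer as provided by Lemma 4.2 (closed under $\delta_k$, transitive, meeting $F_k$, and containing every word of $A^k$ in second coordinates). Consider the augmented system $\widetilde{X}=A^{\mathbb{N}}\times Q'$ with $\widetilde{T}(x,s)=(Tx,\delta_k(s,x_1))$ and the measure $\tilde\mu$ determined by $\tilde\mu(C_w\times\{s\})=(\#A)^{-|w|}/\#Q'$ for $w\in A^*$, $s\in Q'$. Then $\widetilde{T}$ preserves $\tilde\mu$, i.e. $\tilde\mu(\widetilde{T}^{-1}E)=\tilde\mu(E)$ for every measurable $E\subseteq\widetilde{X}$.
   Context: $T$ is the shift on $A^{\mathbb{N}}$, $(Tx)_i=x_{i+1}$; $C_w=\{x\in A^{\mathbb{N}}: x[1..|w|]=w\}$ is the cylinder set of $w$, and $\mu(C_w)=(\#A)^{-|w|}$ defines the uniform Bernoulli measure; cylinder sets $C_w\times\{s\}$ generate the $\sigma$-algebra on $\widetilde{X}$. A group automaton is a deterministic automaton in which each symbol induces a permutation of the states; transitive means any state can reach any other by some word. The $k$-digit buffer has states $Q_k=Q\times A^k$, final states $F_k=F\times A^k$, and transitions $\delta_k((q,w),a)=(\delta(q,a),w)$ if $\delta(q,a)\notin F$, and $\delta_k((q,w),a)=(\delta(q,a),w[2..k]a)$ if $\delta(q,a)\in F$. *)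

theory Defs
  imports "HOL-Probability.Probability"
begin

text \<open>Infinite words x :: nat => 'a are indexed
  from 0, so the paper's x_1 is x 0.\<close>

definition group_automaton :: "('q \<Rightarrow> 'a \<Rightarrow> 'q) \<Rightarrow> bool" where
  "group_automaton \<delta> \<longleftrightarrow> (\<forall>a. bij (\<lambda>q. \<delta> q a))"

definition transitive_automaton :: "('q \<Rightarrow> 'a \<Rightarrow> 'q) \<Rightarrow> bool" where
  "transitive_automaton \<delta> \<longleftrightarrow> (\<forall>p q. \<exists>w. foldl \<delta> p w = q)"

text \<open>k-digit buffer: states (q, w) with w a word of length k (a list).
  The update w[2..k]a is tl (w @ [a]) (for k = 0 this keeps the empty word).\<close>

definition buffer_delta :: "('q \<Rightarrow> 'a \<Rightarrow> 'q) \<Rightarrow> 'q set \<Rightarrow> ('q \<times> 'a list) \<Rightarrow> 'a \<Rightarrow> ('q \<times> 'a list)" where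
  "buffer_delta \<delta> F s a =
     (if \<delta> (fst s) a \<notin> F then (\<delta> (fst s) a, snd s)
      else (\<delta> (fst s) a, tl (snd s @ [a])))"

definition buffer_states :: "nat \<Rightarrow> ('q \<times> 'a list) set" where
  "buffer_states k = {s. length (snd s) = k}"

definition buffer_final :: "'q set \<Rightarrow> nat \<Rightarrow> ('q \<times> 'a list) set" where
  "buffer_final F k = {s. fst s \<in> F \<and> length (snd s) = k}"

definition shift :: "(nat \<Rightarrow> 'a) \<Rightarrow> (nat \<Rightarrow> 'a)" where
  "shift x = (\<lambda>i. x (Suc i))"

definition cylinder :: "'a list \<Rightarrow> (nat \<Rightarrow> 'a) set" where
  "cylinder w = {x. \<forall>i<length w. x i = w ! i}"

definition aug_map :: "('q \<Rightarrow> 'a \<Rightarrow> 'q) \<Rightarrow> 'q set \<Rightarrow> (nat \<Rightarrow> 'a) \<times> ('q \<times> 'a list) \<Rightarrow> (nat \<Rightarrow> 'a) \<times> ('q \<times> 'a list)" where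
  "aug_map \<delta> F p = (shift (fst p), buffer_delta \<delta> F (snd p) (fst p 0))"

definition aug_space :: "('q \<times> 'a list) set \<Rightarrow> ((nat \<Rightarrow> 'a) \<times> ('q \<times> 'a list)) measure" where
  "aug_space Q' = (\<Pi>\<^sub>M i\<in>(UNIV::nat set). count_space (UNIV::'a set)) \<Otimes>\<^sub>M count_space Q'"

end

theory Submission imports Defs begin

lemma finite_bs: "finite (buffer_states k :: ('q::finite \<times> 'a::finite list) set)"
proof -
  have "buffer_states k \<subseteq> (UNIV :: 'q set) \<times> {w::'a list. length w = k}"
    by (auto simp: buffer_states_def)
  moreover have "finite ((UNIV :: 'q set) \<times> {w::'a list. length w = k})"
    using finite_lists_length_eq[of "UNIV::'a set" k] by (intro finite_cartesian_product) simp_all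
  ultimately show ?thesis by (rule finite_subset)
qed

lemma full_indeg:
  fixes \<delta> :: "'q::finite \<Rightarrow> 'a::finite \<Rightarrow> 'q"
  assumes group: "group_automaton \<delta>" and t: "t \<in> buffer_states k"
  shows "card {(s,a). s \<in> buffer_states k \<and> buffer_delta \<delta> F s a = t} = CARD('a)"
proof -
  obtain q' v where tv: "t = (q', v)" by (cases t)
  have lv: "length v = k" using t tv by (simp add: buffer_states_def)
  define ia where "ia a = inv (\<lambda>q. \<delta> q a)" for a
  have b: "bij (\<lambda>q. \<delta> q a)" for a using group by (simp add: group_automaton_def)
  have i1: "\<delta> (ia a q) a = q" for a q unfolding ia_def using b[of a]
    using surj_f_inv_f[OF bij_is_surj[OF b[of a]], of q] by simp
  have i2: "ia a (\<delta> q a) = q" for a q unfolding ia_def using b[of a]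
    using inv_f_f[OF bij_is_inj[OF b[of a]], of q] by simp
  show ?thesis
  proof (cases "q' \<notin> F \<or> k = 0")
    case True
    have "{(s,a). s \<in> buffer_states k \<and> buffer_delta \<delta> F s a = t}
          = (\<lambda>a. ((ia a q', v), a)) ` UNIV"
    proof (rule set_eqI, rule iffI)
      fix p assume "p \<in> {(s,a). s \<in> buffer_states k \<and> buffer_delta \<delta> F s a = t}"
      then obtain q w a where p: "p = ((q,w),a)" "length w = k" "buffer_delta \<delta> F (q,w) a = (q',v)"
        using tv by (auto simp: buffer_states_def)
      have dq: "\<delta> q a = q'" using p(3) by (auto simp: buffer_delta_def split: if_splits)
      hence "q = ia a q'" using i2 by metis
      moreover have "w = v"
      proof (cases "\<delta> q a \<in> F")
        case True
        then have "k = 0" using \<open>q' \<notin> F \<or> k = 0\<close> dq by auto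
        then show ?thesis using p(2) lv by simp
      next
        case False then show ?thesis using p(3) by (simp add: buffer_delta_def)
      qed
      ultimately show "p \<in> (\<lambda>a. ((ia a q', v), a)) ` UNIV" using p by auto
    next
      fix p assume "p \<in> (\<lambda>a. ((ia a q', v), a)) ` UNIV"
      then obtain a where p: "p = ((ia a q', v), a)" by auto
      have "buffer_delta \<delta> F (ia a q', v) a = (q', v)"
      proof (cases "q' \<in> F")
        case True
        then have "k = 0" using \<open>q' \<notin> F \<or> k = 0\<close> by auto
        then have "v = []" using lv by simp
        then show ?thesis using i1 by (simp add: buffer_delta_def)
      next
        case False then show ?thesis using i1 by (simp add: buffer_delta_def)
      qed
      then show "p \<in> {(s,a). s \<in> buffer_states k \<and> buffer_delta \<delta> F s a = t}"
        using p tv lv by (simp add: buffer_states_def)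
    qed
    moreover have "inj (\<lambda>a. ((ia a q', v), a))" by (auto intro: injI)
    ultimately show ?thesis by (simp add: card_image)
  next
    case False
    then have qF: "q' \<in> F" and k0: "k > 0" by auto
    then have vne: "v \<noteq> []" using lv by auto
    define c where "c = last v"
    define u where "u = butlast v"
    have vu: "v = u @ [c]" using vne by (simp add: c_def u_def)
    have lu: "length u = k - 1" using lv by (simp add: u_def)
    have "{(s,a). s \<in> buffer_states k \<and> buffer_delta \<delta> F s a = t}
          = (\<lambda>b. ((ia c q', b # u), c)) ` UNIV"
    proof (rule set_eqI, rule iffI)
      fix p assume "p \<in> {(s,a). s \<in> buffer_states k \<and> buffer_delta \<delta> F s a = t}"
      then obtain q w a where p: "p = ((q,w),a)" "length w = k" "buffer_delta \<delta> F (q,w) a = (q',v)"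
        using tv by (auto simp: buffer_states_def)
      have dq: "\<delta> q a = q'" using p(3) by (auto simp: buffer_delta_def split: if_splits)
      hence qq: "q = ia a q'" using i2 by metis
      have "tl (w @ [a]) = v" using p(3) dq qF by (simp add: buffer_delta_def)
      moreover obtain b r where "w = b # r" using p(2) k0 by (cases w) auto
      ultimately have "r @ [a] = u @ [c]" using vu by simp
      then have "r = u" "a = c" by auto
      then show "p \<in> (\<lambda>b. ((ia c q', b # u), c)) ` UNIV" using p qq \<open>w = b # r\<close> by auto
    next
      fix p assume "p \<in> (\<lambda>b. ((ia c q', b # u), c)) ` UNIV"
      then obtain b where p: "p = ((ia c q', b # u), c)" by auto
      have "buffer_delta \<delta> F (ia c q', b # u) c = (q', v)"
        using i1 qF vu by (simp add: buffer_delta_def)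
      then show "p \<in> {(s,a). s \<in> buffer_states k \<and> buffer_delta \<delta> F s a = t}"
        using p tv lu k0 by (simp add: buffer_states_def)
    qed
    moreover have "inj (\<lambda>b. ((ia c q', b # u), c))" by (auto intro: injI)
    ultimately show ?thesis by (simp add: card_image)
  qed
qed

lemma indeg:
  fixes \<delta> :: "'q::finite \<Rightarrow> 'a::finite \<Rightarrow> 'q"
  assumes group: "group_automaton \<delta>" and sub: "Q' \<subseteq> buffer_states k"
    and closed: "\<forall>s\<in>Q'. \<forall>a. buffer_delta \<delta> F s a \<in> Q'"
    and t: "t \<in> Q'"
  shows "card {(s,a). s \<in> Q' \<and> buffer_delta \<delta> F s a = t} = CARD('a)"
proof -
  let ?P = "\<lambda>t. {(s,a). s \<in> Q' \<and> buffer_delta \<delta> F s a = t}"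
  have fQ: "finite Q'" using sub by (rule finite_subset) (rule finite_bs)
  have fP: "finite (?P t)" for t
    by (rule finite_subset[of _ "Q' \<times> UNIV"]) (auto simp: fQ)
  have le: "card (?P t) \<le> CARD('a)" if "t \<in> Q'" for t
  proof -
    have "card (?P t) \<le> card {(s,a). s \<in> buffer_states k \<and> buffer_delta \<delta> F s a = t}"
      by (rule card_mono) (use sub in \<open>auto intro: finite_subset[of _ "buffer_states k \<times> UNIV"] simp: finite_bs\<close>)
    also have "\<dots> = CARD('a)" using full_indeg[OF group] sub that by blast
    finally show ?thesis .
  qed
  have "Q' \<times> UNIV = (\<Union>t\<in>Q'. ?P t)" using closed by auto
  then have "card (Q' \<times> (UNIV::'a set)) = (\<Sum>t\<in>Q'. card (?P t))"
    by (simp add: card_UN_disjoint fQ fP) (rule card_UN_disjoint, auto simp: fQ fP)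
  then have sum: "(\<Sum>t\<in>Q'. card (?P t)) = (\<Sum>t\<in>Q'. CARD('a))"
    by (simp add: card_cartesian_product)
  show ?thesis
  proof (rule ccontr)
    assume "card (?P t) \<noteq> CARD('a)"
    then have "card (?P t) < CARD('a)" using le[OF t] by simp
    then have "(\<Sum>t\<in>Q'. card (?P t)) < (\<Sum>t\<in>Q'. CARD('a))"
      by (intro sum_strict_mono_ex1) (use fQ le t in auto)
    then show False using sum by simp
  qed
qed

abbreviation "PA \<equiv> (\<Pi>\<^sub>M i\<in>(UNIV::nat set). count_space (UNIV::'a set))"

lemma space_PA: "space (PA :: (nat \<Rightarrow> 'a) measure) = UNIV"
  by (simp add: space_PiM)

lemma cyl_sets: "cylinder w \<in> sets (PA :: (nat \<Rightarrow> 'a) measure)"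
proof -
  have "cylinder w = {x \<in> space (PA :: (nat \<Rightarrow> 'a) measure). \<forall>i<length w. x i = w ! i}"
    by (simp add: cylinder_def space_PA)
  also have "\<dots> \<in> sets PA" by measurable
  finally show ?thesis .
qed

lemma space_aug: "space (aug_space Q') = UNIV \<times> Q'"
  by (simp add: aug_space_def space_pair_measure space_PA)

lemma cyl_Nil: "cylinder [] = UNIV" by (simp add: cylinder_def)

lemma cyl_Cons: "cylinder (a # w) = {x. x 0 = a \<and> shift x \<in> cylinder w}"
  by (auto simp: cylinder_def shift_def All_less_Suc2)

lemma cyl_int_aux:
  assumes "length u \<le> length v"
  shows "cylinder u \<inter> cylinder v = cylinder v \<or> cylinder u \<inter> cylinder v = {}"
proof (cases "take (length u) v = u")
  case True
  have "cylinder v \<subseteq> cylinder u"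
  proof
    fix x assume x: "x \<in> cylinder v"
    show "x \<in> cylinder u" unfolding cylinder_def
    proof (intro CollectI allI impI)
      fix i assume i: "i < length u"
      have "u ! i = v ! i" using True i by (metis nth_take)
      then show "x i = u ! i" using x i assms by (simp add: cylinder_def)
    qed
  qed
  then show ?thesis by blast
next
  case False
  then obtain i where i: "i < length u" "u ! i \<noteq> v ! i"
    using assms by (metis nth_equalityI length_take min.absorb2 nth_take)
  then have "cylinder u \<inter> cylinder v = {}" using assms by (auto simp: cylinder_def)
  then show ?thesis by blast
qed

lemma cyl_int: "cylinder u \<inter> cylinder v = cylinder v \<or> cylinder u \<inter> cylinder v = cylinder u
   \<or> cylinder u \<inter> cylinder v = {}"
  using cyl_int_aux[of u v] cyl_int_aux[of v u] by (cases "length u \<le> length v") (auto simp: Int_commute)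

definition gen :: "('q \<times> 'a list) set \<Rightarrow> ((nat \<Rightarrow> 'a) \<times> ('q \<times> 'a list)) set set" where
  "gen Q' = insert {} {cylinder w \<times> {s} | w s. s \<in> Q'}"

lemma gen_Int_stable: "Int_stable (gen (Q' :: ('q \<times> 'a list) set))"
  unfolding Int_stable_def gen_def
proof (intro ballI)
  fix a b :: "((nat \<Rightarrow> 'a) \<times> ('q \<times> 'a list)) set"
  assume a: "a \<in> insert {} {cylinder w \<times> {s} | w s. s \<in> Q'}"
    and b: "b \<in> insert {} {cylinder w \<times> {s} | w s. s \<in> Q'}"
  show "a \<inter> b \<in> insert {} {cylinder w \<times> {s} | w s. s \<in> Q'}"
  proof (cases "a = {} \<or> b = {}")
    case True then show ?thesis by auto
  next
    case False
    then obtain u s v t where ab: "a = cylinder u \<times> {s}" "b = cylinder v \<times> {t}" "s \<in> Q'" "t \<in> Q'"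
      using a b by blast
    have "a \<inter> b = (cylinder u \<inter> cylinder v) \<times> ({s} \<inter> {t})" using ab by auto
    then show ?thesis using cyl_int[of u v] ab by (cases "s = t") auto
  qed
qed

lemma gen_Pow: "gen Q' \<subseteq> Pow (UNIV \<times> Q')"
  by (auto simp: gen_def)

lemma basic_eq:
  "{f. f i \<in> B} = (\<Union>w\<in>{w::'a list. length w = Suc i \<and> w ! i \<in> B}. cylinder w)"
proof (rule set_eqI, rule iffI)
  fix x :: "nat \<Rightarrow> 'a" assume "x \<in> {f. f i \<in> B}"
  then show "x \<in> (\<Union>w\<in>{w::'a list. length w = Suc i \<and> w ! i \<in> B}. cylinder w)"
    by (intro UN_I[of "map x [0..<Suc i]"]) (auto simp: cylinder_def simp del: upt_Suc)
next
  fix x :: "nat \<Rightarrow> 'a" assume "x \<in> (\<Union>w\<in>{w::'a list. length w = Suc i \<and> w ! i \<in> B}. cylinder w)"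
  then show "x \<in> {f. f i \<in> B}" by (auto simp: cylinder_def)
qed

lemma sets_aug:
  fixes Q' :: "('q::finite \<times> 'a::finite list) set"
  assumes fQ: "finite Q'"
  shows "sets (aug_space Q') = sigma_sets (UNIV \<times> Q') (gen Q')"
proof
  interpret S: sigma_algebra "UNIV \<times> Q'" "sigma_sets (UNIV \<times> Q') (gen Q')"
    by (rule sigma_algebra_sigma_sets[OF gen_Pow])
  have G: "X \<in> sigma_sets (UNIV \<times> Q') (gen Q')" if "X \<in> gen Q'" for X
    using that by (rule sigma_sets.Basic)
  have K: "a \<times> {s} \<in> sigma_sets (UNIV \<times> Q') (gen Q')"
    if s: "s \<in> Q'" and a: "a \<in> sets (PA :: (nat \<Rightarrow> 'a) measure)" for a s
  proof -
    have "a \<in> sigma_sets UNIV {{f\<in>\<Pi>\<^sub>E i\<in>(UNIV::nat set). space (count_space (UNIV::'a set)). f i \<in> A} | i A. i \<in> UNIV \<and> A \<in> sets (count_space UNIV)}"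
      using a by (simp add: sets_PiM_single)
    then have "a \<in> sigma_sets UNIV {{f. f i \<in> A} | i A. True}" by simp
    then show ?thesis
    proof induct
      case (Basic a)
      then obtain i B where aB: "a = {f. f i \<in> B}" by auto
      have "a \<times> {s} = (\<Union>w\<in>{w::'a list. length w = Suc i \<and> w ! i \<in> B}. cylinder w \<times> {s})"
        unfolding aB basic_eq by auto
      also have "\<dots> \<in> sigma_sets (UNIV \<times> Q') (gen Q')"
      proof (rule S.finite_UN)
        show "finite {w::'a list. length w = Suc i \<and> w ! i \<in> B}"
          by (rule finite_subset[of _ "{w. set w \<subseteq> UNIV \<and> length w = Suc i}"])
             (use finite_lists_length_eq[of "UNIV::'a set" "Suc i"] in auto)
        show "cylinder w \<times> {s} \<in> sigma_sets (UNIV \<times> Q') (gen Q')" for w :: "'a list"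
          using s by (intro G) (unfold gen_def, blast)
      qed
      finally show ?case .
    next
      case Empty then show ?case by simp
    next
      case (Compl a)
      have "(UNIV - a) \<times> {s} = cylinder [] \<times> {s} - a \<times> {s}" by (auto simp: cyl_Nil)
      also have "\<dots> \<in> sigma_sets (UNIV \<times> Q') (gen Q')"
      proof (rule S.Diff)
        show "cylinder [] \<times> {s} \<in> sigma_sets (UNIV \<times> Q') (gen Q')"
          using s by (intro G) (unfold gen_def, blast)
        show "a \<times> {s} \<in> sigma_sets (UNIV \<times> Q') (gen Q')" using Compl by simp
      qed
      finally show ?case .
    next
      case (Union a)
      have "(\<Union>i. a i) \<times> {s} = (\<Union>i. a i \<times> {s})" by auto
      also have "\<dots> \<in> sigma_sets (UNIV \<times> Q') (gen Q')"
        using Union by (intro S.countable_UN) auto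
      finally show ?case .
    qed
  qed
  show "sets (aug_space Q') \<subseteq> sigma_sets (UNIV \<times> Q') (gen Q')"
    unfolding aug_space_def sets_pair_measure space_PA space_count_space
  proof (rule S.sigma_sets_subset, safe)
    fix a b assume a: "a \<in> sets (PA :: (nat \<Rightarrow> 'a) measure)" and b: "b \<in> sets (count_space Q')"
    have "a \<times> b = (\<Union>s\<in>b. a \<times> {s})" by auto
    also have "\<dots> \<in> sigma_sets (UNIV \<times> Q') (gen Q')"
      using b fQ K[OF _ a] by (intro S.finite_UN) (auto intro: finite_subset)
    finally show "a \<times> b \<in> sigma_sets (UNIV \<times> Q') (gen Q')" .
  qed
  show "sigma_sets (UNIV \<times> Q') (gen Q') \<subseteq> sets (aug_space Q')"
  proof (rule sets.sigma_sets_subset'[of _ "aug_space Q'", unfolded space_aug])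
    show "gen Q' \<subseteq> sets (aug_space Q')"
      unfolding gen_def aug_space_def using cyl_sets by (auto intro!: pair_measureI)
    show "UNIV \<times> Q' \<in> sets (aug_space Q')"
      using sets.top[of "aug_space Q'"] by (simp add: space_aug)
  qed
qed

lemma aug_meas:
  fixes \<delta> :: "'q::finite \<Rightarrow> 'a::finite \<Rightarrow> 'q" and Q' :: "('q \<times> 'a list) set"
  assumes fQ: "finite Q'" and closed: "\<forall>s\<in>Q'. \<forall>a. buffer_delta \<delta> F s a \<in> Q'"
  shows "aug_map \<delta> F \<in> measurable (aug_space Q') (aug_space Q')"
proof -
  have m1: "(\<lambda>p. shift (fst p)) \<in> measurable (aug_space Q') (PA :: (nat \<Rightarrow> 'a) measure)"
    unfolding shift_def
    by (rule measurable_PiM_single') (auto simp: aug_space_def space_PiM)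
  have g: "(\<lambda>p. (fst p 0, snd p)) \<in> measurable (aug_space Q') (count_space (UNIV::'a set) \<Otimes>\<^sub>M count_space Q')"
    unfolding aug_space_def by measurable
  have eq: "count_space (UNIV::'a set) \<Otimes>\<^sub>M count_space Q' = count_space (UNIV \<times> Q')"
    using fQ by (intro pair_measure_countable) (auto intro: countable_finite)
  have h: "(\<lambda>(a, s). buffer_delta \<delta> F s a) \<in> measurable (count_space (UNIV \<times> Q')) (count_space Q')"
    using closed by auto
  have m2: "(\<lambda>p. buffer_delta \<delta> F (snd p) (fst p 0)) \<in> measurable (aug_space Q') (count_space Q')"
    using measurable_comp[OF g[unfolded eq] h] by (simp add: comp_def)
  show ?thesis
    unfolding aug_map_def[abs_def]
    using measurable_Pair[OF m1 m2] by (simp add: aug_space_def)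
qed


lemma preimage_cyl:
  fixes \<delta> :: "'q::finite \<Rightarrow> 'a::finite \<Rightarrow> 'q" and Q' :: "('q \<times> 'a list) set"
  shows "aug_map \<delta> F -` (cylinder w \<times> {t}) \<inter> (UNIV \<times> Q')
   = (\<Union>p\<in>{(s,a). s \<in> Q' \<and> buffer_delta \<delta> F s a = t}. cylinder (snd p # w) \<times> {fst p})"
  by (auto simp: aug_map_def cyl_Cons)

theorem lemma4p3:
  fixes \<delta> :: "'q::finite \<Rightarrow> 'a::finite \<Rightarrow> 'q"
    and F :: "'q set" and k :: nat
    and Q' :: "('q \<times> 'a list) set"
    and M :: "((nat \<Rightarrow> 'a) \<times> ('q \<times> 'a list)) measure"
  assumes group: "group_automaton \<delta>"
    and trans: "transitive_automaton \<delta>"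
    and sub: "Q' \<subseteq> buffer_states k"
    and closed: "\<forall>s\<in>Q'. \<forall>a. buffer_delta \<delta> F s a \<in> Q'"
    and trans': "\<forall>s\<in>Q'. \<forall>t\<in>Q'. \<exists>w. foldl (buffer_delta \<delta> F) s w = t"
    and meets: "Q' \<inter> buffer_final F k \<noteq> {}"
    and words: "\<forall>w::'a list. length w = k \<longrightarrow> (\<exists>q. (q, w) \<in> Q')"
    and sets_M: "sets M = sets (aug_space Q')"
    and cyl: "\<forall>w s. s \<in> Q' \<longrightarrow>
       emeasure M (cylinder w \<times> {s})
         = ennreal (1 / (real CARD('a) ^ length w * real (card Q')))"
  shows "aug_map \<delta> F \<in> measurable M M \<and>
         (\<forall>E\<in>sets M. emeasure M (aug_map \<delta> F -` E \<inter> space M) = emeasure M E)"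
proof -
  let ?f = "aug_map \<delta> F"
  let ?\<Omega> = "UNIV \<times> Q'"
  have fQ: "finite Q'" using sub by (rule finite_subset) (rule finite_bs)
  have spM: "space M = ?\<Omega>" using sets_eq_imp_space_eq[OF sets_M] by (simp add: space_aug)
  have meas: "?f \<in> measurable M M"
    using aug_meas[OF fQ closed] by (simp add: measurable_cong_sets[OF sets_M sets_M])
  have setsM: "sets M = sigma_sets ?\<Omega> (gen Q')" using sets_M sets_aug[OF fQ] by simp
  have genM: "X \<in> sets M" if "X \<in> gen Q'" for X
    using that setsM by auto
  have cA: "CARD('a) > 0" by simp
  have cylM: "cylinder w \<times> {s} \<in> sets M" if "s \<in> Q'" for w s
    using that by (intro genM) (unfold gen_def, blast)
  have "distr M M ?f = M"
  proof (rule measure_eqI_generator_eq_countable[OF gen_Int_stable gen_Pow _ _ setsM])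
    show "sets (distr M M ?f) = sigma_sets ?\<Omega> (gen Q')" using setsM by simp
    show "{cylinder [] \<times> {s} | s. s \<in> Q'} \<subseteq> gen Q'" unfolding gen_def by blast
    show "\<Union> {cylinder [] \<times> {s} | s. s \<in> Q'} = ?\<Omega>" unfolding cyl_Nil by blast
    have ceq: "{cylinder [] \<times> {s} | s. s \<in> Q'} = (\<lambda>s. cylinder [] \<times> {s}) ` Q'" by blast
    show "countable {cylinder [] \<times> {s} | s. s \<in> Q'}" unfolding ceq using fQ by (intro countable_finite finite_imageI)
    show "emeasure (distr M M ?f) a \<noteq> \<infinity>" if a_in: "a \<in> {cylinder [] \<times> {s} | s. s \<in> Q'}" for a
    proof -
      obtain s where s: "s \<in> Q'" "a = cylinder [] \<times> {s}" using a_in by blast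
      have "a \<in> sets M" using s by (intro genM) (unfold gen_def, blast)
      then have "emeasure (distr M M ?f) a = emeasure M (?f -` a \<inter> space M)"
        by (rule emeasure_distr[OF meas])
      also have "\<dots> \<le> emeasure M (space M)"
        by (rule emeasure_mono) auto
      also have "\<dots> = emeasure M (\<Union>s\<in>Q'. cylinder [] \<times> {s})"
      proof -
        have "(\<Union>s\<in>Q'. cylinder [] \<times> {s}) = space M" unfolding spM cyl_Nil by blast
        then show ?thesis by simp
      qed
      also have "\<dots> = (\<Sum>s\<in>Q'. emeasure M (cylinder [] \<times> {s}))"
        by (rule sum_emeasure[symmetric]) (auto intro: cylM simp: disjoint_family_on_def fQ)
      also have "\<dots> < \<infinity>"
      proof -
        have "emeasure M (cylinder [] \<times> {s}) \<noteq> \<top>" if "s \<in> Q'" for s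
          by (simp only: cyl[rule_format, OF that]) simp
        then show ?thesis using fQ by (simp add: less_top[symmetric])
      qed
      finally show ?thesis by simp
    qed
    show "emeasure (distr M M ?f) X = emeasure M X" if X: "X \<in> gen Q'" for X
    proof -
      have "X \<in> sets M" using X by (rule genM)
      then have "emeasure (distr M M ?f) X = emeasure M (?f -` X \<inter> space M)"
        by (rule emeasure_distr[OF meas])
      also have "\<dots> = emeasure M X"
      proof (cases "X = {}")
        case True then show ?thesis by simp
      next
        case False
        then obtain w t where wt: "X = cylinder w \<times> {t}" "t \<in> Q'" using X by (auto simp: gen_def)
        let ?P = "{(s,a). s \<in> Q' \<and> buffer_delta \<delta> F s a = t}"
        have fP: "finite ?P"
          by (rule finite_subset[of _ "Q' \<times> UNIV"]) (auto simp: fQ)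
        have cP: "card ?P = CARD('a)" by (rule indeg[OF group sub closed wt(2)])
        have "emeasure M (?f -` X \<inter> space M) = emeasure M (\<Union>p\<in>?P. cylinder (snd p # w) \<times> {fst p})"
          unfolding wt spM preimage_cyl ..
        also have "\<dots> = (\<Sum>p\<in>?P. emeasure M (cylinder (snd p # w) \<times> {fst p}))"
        proof (rule sum_emeasure[symmetric])
          show "(\<lambda>p. cylinder (snd p # w) \<times> {fst p}) ` ?P \<subseteq> sets M"
            by (auto intro!: cylM)
          show "finite ?P" by (rule fP)
          show "disjoint_family_on (\<lambda>p. cylinder (snd p # w) \<times> {fst p}) ?P"
            by (auto simp: disjoint_family_on_def cyl_Cons)
        qed
        also have "\<dots> = (\<Sum>p\<in>?P. ennreal (1 / (real CARD('a) ^ Suc (length w) * real (card Q'))))"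
          by (intro sum.cong) (auto simp: cyl)
        also have "\<dots> = ennreal (real (card ?P) * (1 / (real CARD('a) ^ Suc (length w) * real (card Q'))))"
          by (subst ennreal_mult) (auto simp: ennreal_of_nat_eq_real_of_nat)
        also have "real (card ?P) * (1 / (real CARD('a) ^ Suc (length w) * real (card Q')))
               = 1 / (real CARD('a) ^ length w * real (card Q'))"
          unfolding cP using cA by (cases "card Q' = 0") (simp_all add: field_simps)
        also have "ennreal \<dots> = emeasure M X" unfolding wt(1) using cyl[rule_format, OF wt(2)] by simp
        finally show ?thesis .
      qed
      finally show ?thesis .
    qed
  qed
  then have "emeasure M (?f -` E \<inter> space M) = emeasure M E" if "E \<in> sets M" for E
    using emeasure_distr[OF meas that] by simp
  then show ?thesis using meas by blast
qed

end
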